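(* For all integers $n \ge 1$ and $1 \le k \le n$, consideration probabilities are not identifiable in the Plackett--Luce with consideration (PL+C) model on the universe $\mathcal U=\{1,\dots,n\}$ with rankings of length $k$: there exist utilities $u_1,\dots,u_n$ and two distinct vectors of consideration probabilities $(p_1,\dots,p_n)\neq(p_1',\dots,p_n')$ with all entries in $(0,1]$ such that, with the utilities held fixed, both vectors induce exactly the same probability distribution over length-$k$ rankings.
   Context: PL+C model: universe $\mathcal U=\{1,\dots,n\}$, fixed ranking length $k\le n$. Each item $i$ has a utility $u_i$ and a consideration probability $p_i\in(0,1]$. A consideration set $C\subseteq\mathcal U$ is drawn by including each item $i$ independently with probability $p_i$, conditioned on $|C|\ge k$; i.e. for $|C|\ge k$, $\Pr_C(C)=\frac{1}{z_{k,p}}\prod_{i\in C}p_i\prod_{j\notin C}(1-p_j)$ with $z_{k,p}=\sum_{C:|C|\ge k}\prod_{i\in C}p_i\prod_{j\notin C}(1-p_j)$, and $\Pr_C(C)=0$ if $|C|<k$. Given $C$, a ranking $r=(r_1,\dots,r_k)$ of distinct items is produced by Plackett--Luce: $\Pr_{PL}(r\mid C)=\prod_{t=1}^k \frac{\exp(u_{r_t})}{\sum_{j\in C\setminus\{r_1,\dots,r_{t-1}\}}\exp(u_j)}$ if $\{r_1,\dots,r_k\}\subseteq C$, and $0$ otherwise. The PL+C probability of $r$ is $\Pr_{PLC}(r)=\sum_{C\subseteq\mathcal U}\Pr_C(C)\Pr_{PL}(r\mid C)$. *)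

theory Defs
  imports Complex_Main
begin

definition universe :: "nat \<Rightarrow> nat set" where
  "universe n = {1..n}"

definition cons_weight :: "nat \<Rightarrow> (nat \<Rightarrow> real) \<Rightarrow> nat set \<Rightarrow> real" where
  "cons_weight n p C = (\<Prod>i\<in>C. p i) * (\<Prod>j\<in>universe n - C. 1 - p j)"

definition z_norm :: "nat \<Rightarrow> nat \<Rightarrow> (nat \<Rightarrow> real) \<Rightarrow> real" where
  "z_norm n k p = (\<Sum>C\<in>{C. C \<subseteq> universe n \<and> card C \<ge> k}. cons_weight n p C)"

definition Pr_C :: "nat \<Rightarrow> nat \<Rightarrow> (nat \<Rightarrow> real) \<Rightarrow> nat set \<Rightarrow> real" where
  "Pr_C n k p C = (if C \<subseteq> universe n \<and> card C \<ge> k then cons_weight n p C / z_norm n k p else 0)"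

definition Pr_PL :: "(nat \<Rightarrow> real) \<Rightarrow> nat set \<Rightarrow> nat list \<Rightarrow> real" where
  "Pr_PL u C r = (if set r \<subseteq> C then
      (\<Prod>t<length r. exp (u (r ! t)) / (\<Sum>j\<in>C - set (take t r). exp (u j)))
    else 0)"

definition Pr_PLC :: "nat \<Rightarrow> nat \<Rightarrow> (nat \<Rightarrow> real) \<Rightarrow> (nat \<Rightarrow> real) \<Rightarrow> nat list \<Rightarrow> real" where
  "Pr_PLC n k u p r = (\<Sum>C\<in>Pow (universe n). Pr_C n k p C * Pr_PL u C r)"

definition rankings :: "nat \<Rightarrow> nat \<Rightarrow> nat list set" where
  "rankings n k = {r. distinct r \<and> length r = k \<and> set r \<subseteq> universe n}"

end

theory Submission
  imports Defs
begin

lemma prod_fact: "j \<le> m \<Longrightarrow> (\<Prod>t<j. real (m - t)) = fact m / fact (m - j)"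
proof (induction j)
  case 0 then show ?case by simp
next
  case (Suc j)
  have fe: "fact (m - j) = real (m - j) * fact (m - Suc j)"
    using Suc.prems by (metis Suc_diff_Suc Suc_le_lessD fact_Suc)
  have "(\<Prod>t<Suc j. real (m - t)) = (\<Prod>t<j. real (m - t)) * real (m - j)" by simp
  also have "\<dots> = fact m / fact (m - j) * real (m - j)" using Suc by simp
  also have "\<dots> = fact m / fact (m - Suc j)" unfolding fe
    using Suc.prems by (simp del: of_nat_diff)
  finally show ?case .
qed

lemma PL_zero:
  assumes "distinct r" "length r = k" "finite C"
  shows "Pr_PL (\<lambda>_. 0) C r = (if set r \<subseteq> C then 1 / (\<Prod>t<k. real (card C - t)) else 0)"
proof (cases "set r \<subseteq> C")
  case True
  have cd: "card (C - set (take t r)) = card C - t" if "t < k" for t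
  proof -
    have "set (take t r) \<subseteq> C" using True set_take_subset by (metis order_trans)
    moreover have "card (set (take t r)) = t" using assms that
      by (simp add: distinct_card)
    ultimately show "card (C - set (take t r)) = card C - t"
      using assms(3) by (simp add: card_Diff_subset finite_subset)
  qed
  have "(\<Prod>t<length r. exp ((\<lambda>_. 0::real) (r ! t)) / (\<Sum>j\<in>C - set (take t r). exp ((\<lambda>_. 0::real) j)))
     = (\<Prod>t<k. 1 / real (card C - t))"
    using assms(2) by (intro prod.cong) (simp_all add: cd)
  also have "\<dots> = 1 / (\<Prod>t<k. real (card C - t))" by (simp add: prod_dividef)
  finally show ?thesis using True unfolding Pr_PL_def by simp
next
  case False then show ?thesis by (simp add: Pr_PL_def)
qed

lemma sum_pow_card:
  assumes "finite A"
  shows "(\<Sum>B\<in>Pow A. h (card B)) = (\<Sum>j\<le>card A. real (card A choose j) * h j)"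
proof -
  have "(\<Sum>B\<in>Pow A. h (card B)) = (\<Sum>j\<le>card A. \<Sum>B\<in>{B\<in>Pow A. card B = j}. h (card B))"
    by (rule sum.group[symmetric]) (auto simp: assms card_mono)
  also have "\<dots> = (\<Sum>j\<le>card A. real (card A choose j) * h j)"
  proof (rule sum.cong[OF refl])
    fix j
    have "(\<Sum>B\<in>{B\<in>Pow A. card B = j}. h (card B)) = (\<Sum>B\<in>{B\<in>Pow A. card B = j}. h j)"
      by (rule sum.cong) auto
    also have "\<dots> = real (card {B. B \<subseteq> A \<and> card B = j}) * h j" by simp
    finally show "(\<Sum>B\<in>{B\<in>Pow A. card B = j}. h (card B)) = real (card A choose j) * h j"
      using n_subsets[OF assms] by simp
  qed
  finally show ?thesis .
qed

lemma G_fact: "k \<le> m \<Longrightarrow> 1 / (\<Prod>t<k. real (m - t)) = fact (m - k) / fact m"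
  by (simp add: prod_fact del: of_nat_diff)

lemma binom_identity:
  assumes "k \<le> n"
  shows "(\<Sum>j\<le>n-k. real (n-k choose j) * (fact (k+j-k) / fact (k+j)))
       = fact (n-k) / fact n * (\<Sum>j\<le>n. real (n choose j) * (if k \<le> j then 1 else 0))"
proof -
  have "(\<Sum>j\<le>n. real (n choose j) * (if k \<le> j then 1 else 0)) = (\<Sum>j\<in>{k..n}. real (n choose j))"
    by (rule sum.mono_neutral_cong_right) auto
  also have "\<dots> = (\<Sum>j\<in>{0+k..(n-k)+k}. real (n choose j))" using assms by simp
  also have "\<dots> = (\<Sum>j=0..n-k. real (n choose (j+k)))" by (rule sum.shift_bounds_cl_nat_ivl)
  finally have e: "(\<Sum>j\<le>n. real (n choose j) * (if k \<le> j then 1 else 0)) = (\<Sum>j\<le>n-k. real (n choose (j+k)))"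
    by (simp add: atLeast0AtMost)
  have t: "real (n-k choose j) * (fact (k+j-k) / fact (k+j)) = fact (n-k) / fact n * real (n choose (j+k))"
    if "j \<le> n - k" for j
  proof -
    have b1: "real (n-k choose j) = fact (n-k) / (fact j * fact (n-k-j))" using that by (rule binomial_fact)
    have b2: "real (n choose (j+k)) = fact n / (fact (j+k) * fact (n-(j+k)))"
      using that assms by (intro binomial_fact) simp
    have e: "n-k-j = n-(j+k)" "k+j-k = j" "k+j = j+k" by simp_all
    show ?thesis unfolding b1 b2 e by (simp add: field_simps)
  qed
  show ?thesis unfolding e sum_distrib_left by (intro sum.cong refl t) simp
qed

lemma fin_U: "finite (universe n)" and card_U: "card (universe n) = n"
  by (simp_all add: universe_def)

lemma P1:
  assumes r: "r \<in> rankings n k" and kn: "k \<le> n"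
  shows "Pr_PLC n k (\<lambda>_. 0) (\<lambda>_. 1) r = 1 / (\<Prod>t<k. real (n - t))"
proof -
  let ?U = "universe n"
  have cw: "cons_weight n (\<lambda>_. 1) C = (if C = ?U then 1 else 0)" if CU: "C \<subseteq> ?U" for C
  proof (cases "C = ?U")
    case False
    then obtain j where "j \<in> ?U - C" using CU by blast
    then have "(\<Prod>j\<in>?U - C. 1 - (\<lambda>_. 1::real) j) = 0"
      using fin_U by (intro prod_zero) auto
    then show ?thesis using False unfolding cons_weight_def by simp
  qed (simp add: cons_weight_def)
  have z: "z_norm n k (\<lambda>_. 1) = 1"
  proof -
    have "z_norm n k (\<lambda>_. 1) = (\<Sum>C\<in>{C. C \<subseteq> ?U \<and> card C \<ge> k}. if C = ?U then 1 else 0)"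
      unfolding z_norm_def by (intro sum.cong refl) (simp add: cw)
    also have "\<dots> = 1"
      using kn fin_U by (simp add: sum.delta' card_U)
    finally show ?thesis .
  qed
  have rr: "distinct r" "length r = k" "set r \<subseteq> ?U" using r by (auto simp: rankings_def)
  have "Pr_PLC n k (\<lambda>_. 0) (\<lambda>_. 1) r = (\<Sum>C\<in>Pow ?U. if C = ?U then 1 / (\<Prod>t<k. real (n - t)) else 0)"
    unfolding Pr_PLC_def
  proof (intro sum.cong refl)
    fix C assume C: "C \<in> Pow ?U"
    then have fC: "finite C" using fin_U finite_subset by blast
    show "Pr_C n k (\<lambda>_. 1) C * Pr_PL (\<lambda>_. 0) C r = (if C = ?U then 1 / (\<Prod>t<k. real (n - t)) else 0)"
      using C rr kn unfolding Pr_C_def PL_zero[OF rr(1,2) fC]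
      by (simp add: cw z card_U)
  qed
  also have "\<dots> = 1 / (\<Prod>t<k. real (n - t))"
    using fin_U by (simp add: sum.delta')
  finally show ?thesis .
qed

lemma P2:
  assumes r: "r \<in> rankings n k" and kn: "k \<le> n"
  shows "Pr_PLC n k (\<lambda>_. 0) (\<lambda>_. 1/2) r = 1 / (\<Prod>t<k. real (n - t))"
proof -
  let ?U = "universe n"
  let ?G = "\<lambda>m. 1 / (\<Prod>t<k. real (m - t))"
  define N where "N = (\<Sum>C\<in>Pow ?U. if k \<le> card C then 1 else (0::real))"
  have rr: "distinct r" "length r = k" "set r \<subseteq> ?U" using r by (auto simp: rankings_def)
  define S where "S = set r"
  have cS: "card S = k" using rr by (simp add: S_def distinct_card)
  have SU: "S \<subseteq> ?U" using rr S_def by simp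
  have fS: "finite S" by (simp add: S_def)
  have cw: "cons_weight n (\<lambda>_. 1/2) C = (1/2)^n" if CU: "C \<subseteq> ?U" for C
  proof -
    have "card C + card (?U - C) = n" using CU fin_U card_U
      by (metis card_Diff_subset card_mono finite_subset le_add_diff_inverse)
    then show ?thesis unfolding cons_weight_def by (simp add: power_add[symmetric])
  qed
  have Nsum: "N = (\<Sum>j\<le>n. real (n choose j) * (if k \<le> j then 1 else 0))"
    unfolding N_def using sum_pow_card[OF fin_U, of "\<lambda>m. if k \<le> m then 1 else (0::real)"]
    by (simp add: card_U)
  have Npos: "N > 0"
  proof -
    have "Pow ?U \<inter> {C. k \<le> card C} = {C\<in>Pow ?U. k \<le> card C}" by auto
    then have "N = real (card {C\<in>Pow ?U. k \<le> card C})" unfolding N_def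
      by (simp add: sum.If_cases fin_U)
    moreover have "?U \<in> {C\<in>Pow ?U. k \<le> card C}" using kn by (simp add: card_U)
    then have "card {C\<in>Pow ?U. k \<le> card C} > 0"
      by (intro iffD2[OF card_gt_0_iff]) (use fin_U in auto)
    ultimately show ?thesis by simp
  qed
  have z: "z_norm n k (\<lambda>_. 1/2) = N * (1/2)^n"
  proof -
    have "z_norm n k (\<lambda>_. 1/2) = (\<Sum>C\<in>{C. C \<subseteq> ?U \<and> card C \<ge> k}. (1/2)^n)"
      unfolding z_norm_def by (intro sum.cong refl) (simp add: cw)
    also have "\<dots> = real (card {C. C \<subseteq> ?U \<and> card C \<ge> k}) * (1/2)^n" by simp
    also have "real (card {C. C \<subseteq> ?U \<and> card C \<ge> k}) = N" unfolding N_def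
    proof -
      have "Pow ?U \<inter> {C. k \<le> card C} = {C. C \<subseteq> ?U \<and> card C \<ge> k}" by auto
      then show "real (card {C. C \<subseteq> ?U \<and> card C \<ge> k}) = (\<Sum>C\<in>Pow ?U. if k \<le> card C then 1 else (0::real))"
        by (simp add: sum.If_cases fin_U)
    qed
    finally show ?thesis .
  qed
  have "Pr_PLC n k (\<lambda>_. 0) (\<lambda>_. 1/2) r = (\<Sum>C\<in>Pow ?U. (1/N) * (if S \<subseteq> C then ?G (card C) else 0))"
    unfolding Pr_PLC_def
  proof (intro sum.cong refl)
    fix C assume C: "C \<in> Pow ?U"
    then have fC: "finite C" using fin_U finite_subset by blast
    have "S \<subseteq> C \<Longrightarrow> k \<le> card C" using fC cS card_mono by blast
    then show "Pr_C n k (\<lambda>_. 1/2) C * Pr_PL (\<lambda>_. 0) C r = (1/N) * (if S \<subseteq> C then ?G (card C) else 0)"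
      using C unfolding Pr_C_def PL_zero[OF rr(1,2) fC] S_def[symmetric]
      by (auto simp: cw z)
  qed
  also have "\<dots> = (1/N) * (\<Sum>C\<in>{C. S \<subseteq> C \<and> C \<subseteq> ?U}. ?G (card C))"
  proof -
    have e: "Pow ?U \<inter> {C. S \<subseteq> C} = {C. S \<subseteq> C \<and> C \<subseteq> ?U}" by auto
    have "(\<Sum>C\<in>Pow ?U. (if S \<subseteq> C then ?G (card C) else 0)) = (\<Sum>C\<in>{C. S \<subseteq> C \<and> C \<subseteq> ?U}. ?G (card C))"
      unfolding sum.If_cases[OF finite_Pow_iff[THEN iffD2, OF fin_U]] e by simp
    then show ?thesis by (simp add: sum_divide_distrib[symmetric])
  qed
  also have "(\<Sum>C\<in>{C. S \<subseteq> C \<and> C \<subseteq> ?U}. ?G (card C)) = (\<Sum>B\<in>Pow (?U - S). ?G (card (S \<union> B)))"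
  proof -
    have "{C. S \<subseteq> C \<and> C \<subseteq> ?U} = (\<lambda>B. S \<union> B) ` Pow (?U - S)"
    proof
      show "{C. S \<subseteq> C \<and> C \<subseteq> ?U} \<subseteq> (\<lambda>B. S \<union> B) ` Pow (?U - S)"
      proof
        fix C assume "C \<in> {C. S \<subseteq> C \<and> C \<subseteq> ?U}"
        then have "C = S \<union> (C - S)" "C - S \<in> Pow (?U - S)" by auto
        then show "C \<in> (\<lambda>B. S \<union> B) ` Pow (?U - S)" by blast
      qed
    qed (use SU in auto)
    moreover have "inj_on (\<lambda>B. S \<union> B) (Pow (?U - S))"
      by (rule inj_onI) blast
    ultimately show ?thesis by (simp add: sum.reindex)
  qed
  also have "(\<Sum>B\<in>Pow (?U - S). ?G (card (S \<union> B))) = (\<Sum>B\<in>Pow (?U - S). ?G (k + card B))"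
  proof (intro sum.cong refl)
    fix B assume "B \<in> Pow (?U - S)"
    then have "card (S \<union> B) = k + card B" using cS fS fin_U
      by (subst card_Un_disjoint) (auto intro: finite_subset)
    then show "?G (card (S \<union> B)) = ?G (k + card B)" by simp
  qed
  also have "\<dots> = (\<Sum>j\<le>n-k. real (n-k choose j) * ?G (k + j))"
    using sum_pow_card[of "?U - S" "\<lambda>m. ?G (k + m)"] fin_U SU cS card_U
    by (simp add: card_Diff_subset fS)
  also have "\<dots> = (\<Sum>j\<le>n-k. real (n-k choose j) * (fact (k+j-k) / fact (k+j)))"
    by (intro sum.cong refl) (simp add: G_fact del: of_nat_diff)
  also have "\<dots> = fact (n-k) / fact n * N" unfolding Nsum by (rule binom_identity[OF kn])
  finally show ?thesis using Npos kn by (simp add: G_fact del: of_nat_diff)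
qed

theorem theorem1:
  fixes n k :: nat
  assumes "1 \<le> n" and "1 \<le> k" and "k \<le> n"
  shows "\<exists>(u :: nat \<Rightarrow> real) (p :: nat \<Rightarrow> real) (p' :: nat \<Rightarrow> real).
           (\<forall>i\<in>universe n. 0 < p i \<and> p i \<le> 1) \<and>
           (\<forall>i\<in>universe n. 0 < p' i \<and> p' i \<le> 1) \<and>
           (\<exists>i\<in>universe n. p i \<noteq> p' i) \<and>
           (\<forall>r\<in>rankings n k. Pr_PLC n k u p r = Pr_PLC n k u p' r)"
proof (intro exI conjI)
  show "\<forall>i\<in>universe n. 0 < (1::real) \<and> (1::real) \<le> 1" by simp
  show "\<forall>i\<in>universe n. 0 < (1/2::real) \<and> (1/2::real) \<le> 1" by simp
  show "\<exists>i\<in>universe n. (\<lambda>_. 1::real) i \<noteq> (\<lambda>_. 1/2) i"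
    using assms(1) by (auto simp: universe_def)
  show "\<forall>r\<in>rankings n k. Pr_PLC n k (\<lambda>_. 0) (\<lambda>_. 1) r = Pr_PLC n k (\<lambda>_. 0) (\<lambda>_. 1/2) r"
    using P1 P2 assms(3) by simp
qed

end
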